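(* Let $G$ be a connected graph with a pair of vertices of order $h$ and a marking $S$. Let $v,v'$ be two vertices of $G$ joined by exactly $e\geq1$ edges, with weights $s$ and $s'$ where $s>s'$, and normalize the marking (by adding a constant vector) so that $s'=0$; assume $s\ge 2$. Let $G'$ be obtained from $G$ by thickening the edges between $v$ and $v'$. Then the group $\Phi(G')$ contains $(\mathbb{Z}/es\mathbb{Z})^{s-2}$ as a direct summand.
   Context: Graphs are finite, connected, may have multiple edges, no loops. With $c_{ij}$ ($i\neq j$) the number of edges joining $v_i,v_j$, $c_{ii}=-\sum_{j\ne i}c_{ij}$ and $M(G)=(c_{ij})$, one has $\mathbb{Z}^n/\mathrm{Im}(M(G))\cong\mathbb{Z}\times\Phi(G)$ with $\Phi(G)$ the finite torsion subgroup ($\mathrm{Im}$ = $\mathbb{Z}$-span of columns). A pair $\{v_i,v_j\}$ has order $h>0$ if there is $S=(s_1,\dots,s_n)^t\in\mathbb{Z}^n$ with $M(G)S=h(e_i-e_j)$ and $\gcd(s_1-s_n,\dots,s_{n-1}-s_n)=1$; $S$ is a marking and $s_k$ the weight of $v_k$; $S+\alpha(1,\dots,1)^t$ is also a marking. Thickening the $e$ edges between $v'$ (weight $s'$) and $v$ (weight $s>s'$): delete them, add new vertices $w_1,\dots,w_{s-s'-1}$, and with $w_0=v'$, $w_{s-s'}=v$, join $w_{k-1}$ and $w_k$ by $e(s-s')$ edges for $k=1,\dots,s-s'$. *)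

theory Defs
  imports "HOL-Algebra.Algebra"
begin

text \<open>A multigraph on the vertex set {0..<n}: c i j = number of edges joining i and j.\<close>

definition multigraph :: "nat \<Rightarrow> (nat \<Rightarrow> nat \<Rightarrow> nat) \<Rightarrow> bool" where
  "multigraph n c \<longleftrightarrow> (\<forall>i j. c i j = c j i) \<and> (\<forall>i. c i i = 0)
     \<and> (\<forall>i j. (n \<le> i \<or> n \<le> j) \<longrightarrow> c i j = 0)"

definition connected_mg :: "nat \<Rightarrow> (nat \<Rightarrow> nat \<Rightarrow> nat) \<Rightarrow> bool" where
  "connected_mg n c \<longleftrightarrow> 0 < n \<and>
     (\<forall>i<n. \<forall>j<n. (\<lambda>x y. x < n \<and> y < n \<and> 0 < c x y)\<^sup>*\<^sup>* i j)"

definition lapM :: "nat \<Rightarrow> (nat \<Rightarrow> nat \<Rightarrow> nat) \<Rightarrow> nat \<Rightarrow> nat \<Rightarrow> int" where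
  "lapM n c i j = (if i = j then - (\<Sum>k\<in>{..<n} - {i}. int (c i k)) else int (c i j))"

definition zvecs :: "nat \<Rightarrow> (nat \<Rightarrow> int) set" where
  "zvecs n = {x. \<forall>i\<ge>n. x i = 0}"

definition mat_vec :: "nat \<Rightarrow> (nat \<Rightarrow> nat \<Rightarrow> int) \<Rightarrow> (nat \<Rightarrow> int) \<Rightarrow> (nat \<Rightarrow> int)" where
  "mat_vec n A x = (\<lambda>i. if i < n then (\<Sum>j<n. A i j * x j) else 0)"

definition zvec_group :: "nat \<Rightarrow> (nat \<Rightarrow> int) monoid" where
  "zvec_group n = \<lparr>carrier = zvecs n, monoid.mult = (\<lambda>x y k. x k + y k), one = (\<lambda>_. 0)\<rparr>"

definition lap_image :: "nat \<Rightarrow> (nat \<Rightarrow> nat \<Rightarrow> nat) \<Rightarrow> (nat \<Rightarrow> int) set" where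
  "lap_image n c = mat_vec n (lapM n c) ` zvecs n"

definition coker_group :: "nat \<Rightarrow> (nat \<Rightarrow> nat \<Rightarrow> nat) \<Rightarrow> (nat \<Rightarrow> int) set monoid" where
  "coker_group n c = zvec_group n Mod lap_image n c"

definition critical_group :: "nat \<Rightarrow> (nat \<Rightarrow> nat \<Rightarrow> nat) \<Rightarrow> (nat \<Rightarrow> int) set monoid" where
  "critical_group n c = (coker_group n c)\<lparr>carrier :=
     {a \<in> carrier (coker_group n c). \<exists>k::nat. 0 < k \<and> a [^]\<^bsub>coker_group n c\<^esub> k = \<one>\<^bsub>coker_group n c\<^esub>}\<rparr>"

text \<open>The pair {v_i, v_j} has order h with marking S (vertices 0..<n, the last one is n-1).\<close>

definition unit_vec :: "nat \<Rightarrow> nat \<Rightarrow> int" where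
  "unit_vec i = (\<lambda>k. if k = i then 1 else 0)"

definition is_marking :: "nat \<Rightarrow> (nat \<Rightarrow> nat \<Rightarrow> nat) \<Rightarrow> nat \<Rightarrow> nat \<Rightarrow> int \<Rightarrow> (nat \<Rightarrow> int) \<Rightarrow> bool" where
  "is_marking n c i j h S \<longleftrightarrow> S \<in> zvecs n \<and>
     mat_vec n (lapM n c) S = (\<lambda>k. h * (unit_vec i k - unit_vec j k)) \<and>
     Gcd ((\<lambda>k. S k - S (n - 1)) ` {..<n - 1}) = 1"

definition pair_order :: "nat \<Rightarrow> (nat \<Rightarrow> nat \<Rightarrow> nat) \<Rightarrow> nat \<Rightarrow> nat \<Rightarrow> int \<Rightarrow> bool" where
  "pair_order n c i j h \<longleftrightarrow> i < n \<and> j < n \<and> i \<noteq> j \<and> 0 < h \<and> (\<exists>S. is_marking n c i j h S)"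

text \<open>Thickening the edges between v' (weight s') and v (weight s > s'), with d = s - s'.
  New vertices w_1..w_{d-1} are n, ..., n+d-2; w_0 = v', w_d = v.\<close>

definition thick_vertex :: "nat \<Rightarrow> nat \<Rightarrow> nat \<Rightarrow> nat \<Rightarrow> nat \<Rightarrow> nat" where
  "thick_vertex n v v' d k = (if k = 0 then v' else if k = d then v else n + k - 1)"

definition thicken :: "nat \<Rightarrow> (nat \<Rightarrow> nat \<Rightarrow> nat) \<Rightarrow> nat \<Rightarrow> nat \<Rightarrow> nat \<Rightarrow> (nat \<Rightarrow> nat \<Rightarrow> nat)" where
  "thicken n c v v' d = (\<lambda>x y.
     (if {x, y} = {v, v'} then 0 else c x y)
     + (if \<exists>k\<in>{1..d}. {x, y} = {thick_vertex n v v' d (k - 1), thick_vertex n v v' d k}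
        then c v v' * d else 0))"

definition zmod_power :: "nat \<Rightarrow> nat \<Rightarrow> (nat \<Rightarrow> int) monoid" where
  "zmod_power m k = product_group {..<k} (\<lambda>_. integer_mod_group m)"

definition direct_summand_iso :: "('a, 'c) monoid_scheme \<Rightarrow> ('b, 'd) monoid_scheme \<Rightarrow> bool" where
  "direct_summand_iso H G \<longleftrightarrow> (\<exists>A B. subgroup A G \<and> subgroup B G \<and> A \<inter> B = {\<one>\<^bsub>G\<^esub>}
     \<and> A <#>\<^bsub>G\<^esub> B = carrier G \<and> G\<lparr>carrier := A\<rparr> \<cong> H)"

end

theory Submission imports Defs "HOL-Library.Function_Algebras" begin

lemma split_summand:
  assumes T: "group Tg" and H: "group Hg" and s: "\<sigma> \<in> hom Hg Tg" and p: "\<pi> \<in> hom Tg Hg"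
    and ps: "\<And>a. a \<in> carrier Hg \<Longrightarrow> \<pi> (\<sigma> a) = a"
  shows "direct_summand_iso Hg Tg"
proof -
  have gs: "group_hom Hg Tg \<sigma>" using T H s by (simp add: group_hom_def group_hom_axioms_def)
  have gp: "group_hom Tg Hg \<pi>" using T H p by (simp add: group_hom_def group_hom_axioms_def)
  have pc: "\<And>x. x \<in> carrier Tg \<Longrightarrow> \<pi> x \<in> carrier Hg" using p by (auto simp: hom_def)
  have sc: "\<And>x. x \<in> carrier Hg \<Longrightarrow> \<sigma> x \<in> carrier Tg" using s by (auto simp: hom_def)
  have pm: "\<And>x y. x \<in> carrier Tg \<Longrightarrow> y \<in> carrier Tg \<Longrightarrow> \<pi> (x \<otimes>\<^bsub>Tg\<^esub> y) = \<pi> x \<otimes>\<^bsub>Hg\<^esub> \<pi> y" using p by (auto simp: hom_def)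
  define A where "A = \<sigma> ` carrier Hg"
  define B where "B = kernel Tg Hg \<pi>"
  have sA: "subgroup A Tg" unfolding A_def by (rule group_hom.img_is_subgroup[OF gs])
  have sB: "subgroup B Tg" unfolding B_def by (rule group_hom.subgroup_kernel[OF gp])
  have AB: "A \<inter> B = {\<one>\<^bsub>Tg\<^esub>}"
  proof
    show "A \<inter> B \<subseteq> {\<one>\<^bsub>Tg\<^esub>}"
    proof
      fix xx assume "xx \<in> A \<inter> B"
      then obtain a where a: "a \<in> carrier Hg" "xx = \<sigma> a" and "\<pi> xx = \<one>\<^bsub>Hg\<^esub>"
        unfolding A_def B_def kernel_def by auto
      then have "a = \<one>\<^bsub>Hg\<^esub>" using ps by auto
      then show "xx \<in> {\<one>\<^bsub>Tg\<^esub>}" using a group_hom.hom_one[OF gs] by simp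
    qed
  next
    show "{\<one>\<^bsub>Tg\<^esub>} \<subseteq> A \<inter> B" using subgroup.one_closed[OF sA] subgroup.one_closed[OF sB] by auto
  qed
  have prod: "A <#>\<^bsub>Tg\<^esub> B = carrier Tg"
  proof
    show "A <#>\<^bsub>Tg\<^esub> B \<subseteq> carrier Tg"
      using subgroup.subset[OF sA] subgroup.subset[OF sB] monoid.m_closed[OF group.is_monoid[OF T]]
      unfolding set_mult_def by blast
  next
    show "carrier Tg \<subseteq> A <#>\<^bsub>Tg\<^esub> B"
    proof
      fix xx assume xx: "xx \<in> carrier Tg"
      define yy where "yy = \<sigma> (\<pi> xx)"
      have yy: "yy \<in> carrier Tg" "yy \<in> A" unfolding yy_def A_def using xx pc sc by auto
      have "inv\<^bsub>Tg\<^esub> yy \<otimes>\<^bsub>Tg\<^esub> xx \<in> B"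
        unfolding B_def kernel_def using xx yy ps[of "\<pi> xx"] pc pm
          group_hom.hom_inv[OF gp] group.inv_closed[OF T] group.l_inv[OF H]
          monoid.m_closed[OF group.is_monoid[OF T]] by (simp add: yy_def)
      moreover have "xx = yy \<otimes>\<^bsub>Tg\<^esub> (inv\<^bsub>Tg\<^esub> yy \<otimes>\<^bsub>Tg\<^esub> xx)"
        using xx yy by (simp add: monoid.m_assoc[OF group.is_monoid[OF T], symmetric] group.r_inv[OF T] group.inv_closed[OF T] monoid.l_one[OF group.is_monoid[OF T]])
      ultimately show "xx \<in> A <#>\<^bsub>Tg\<^esub> B" unfolding set_mult_def using yy by blast
    qed
  qed
  have iso: "\<pi> \<in> iso (Tg\<lparr>carrier := A\<rparr>) Hg"
  proof -
    have "\<pi> \<in> hom (Tg\<lparr>carrier := A\<rparr>) Hg"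
      using subgroup.subset[OF sA] pc pm by (auto simp: hom_def subset_iff)
    moreover have "bij_betw \<pi> A (carrier Hg)"
      unfolding bij_betw_def inj_on_def A_def using ps by force
    ultimately show ?thesis by (simp add: iso_def)
  qed
  show ?thesis unfolding direct_summand_iso_def is_iso_def
    using sA sB AB prod iso by blast
qed


lemma zvg_mult[simp]: "x \<otimes>\<^bsub>zvec_group N\<^esub> y = x + y"
  by (simp add: zvec_group_def plus_fun_def)
lemma zvg_one[simp]: "\<one>\<^bsub>zvec_group N\<^esub> = 0"
  by (simp add: zvec_group_def zero_fun_def)
lemma zvg_carrier[simp]: "carrier (zvec_group N) = zvecs N"
  by (simp add: zvec_group_def)

lemma zvecs_add: "x \<in> zvecs N \<Longrightarrow> y \<in> zvecs N \<Longrightarrow> x + y \<in> zvecs N"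
  by (simp add: zvecs_def)
lemma zvecs_neg: "x \<in> zvecs N \<Longrightarrow> - x \<in> zvecs N"
  by (simp add: zvecs_def)
lemma zvecs_0[simp]: "0 \<in> zvecs N"
  by (simp add: zvecs_def)

lemma zvg_comm_group: "comm_group (zvec_group N)"
proof (rule comm_groupI)
  fix x assume "x \<in> carrier (zvec_group N)"
  then show "\<exists>y\<in>carrier (zvec_group N). y \<otimes>\<^bsub>zvec_group N\<^esub> x = \<one>\<^bsub>zvec_group N\<^esub>"
    by (intro bexI[of _ "-x"]) (auto simp: zvecs_neg)
qed (auto simp: zvecs_add add.commute add.assoc)

lemma zvg_inv[simp]: "x \<in> zvecs N \<Longrightarrow> inv\<^bsub>zvec_group N\<^esub> x = - x"
  using zvg_comm_group[of N]
  by (intro group.inv_equality) (auto simp: comm_group_def zvecs_neg)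

lemma rcos_zvg: "L #>\<^bsub>zvec_group N\<^esub> x = (\<lambda>l. l + x) ` L"
  by (auto simp: r_coset_def)

lemma coset_part:
  fixes N m k0 :: nat and L :: "(nat \<Rightarrow> int) set" and r :: "nat \<Rightarrow> nat"
    and u :: "(nat \<Rightarrow> int) \<Rightarrow> (nat \<Rightarrow> int)"
  assumes Lsub: "L \<subseteq> zvecs N" and L0: "0 \<in> L"
    and Ladd: "\<And>a b. a \<in> L \<Longrightarrow> b \<in> L \<Longrightarrow> a + b \<in> L"
    and Lsc: "\<And>a z. a \<in> L \<Longrightarrow> (\<lambda>i. z * a i) \<in> L"
    and mpos: "0 < m"
    and Ldvd: "\<And>x t. x \<in> L \<Longrightarrow> t < k0 \<Longrightarrow> int m dvd x (r t)"
    and uz: "\<And>a. u a \<in> zvecs N"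
    and uadd: "\<And>a b. u (a + b) = u a + u b"
    and uhom: "\<And>a z. u (\<lambda>t. z * a t) = (\<lambda>i. z * u a i)"
    and uloc: "\<And>a b. (\<And>t. t < k0 \<Longrightarrow> a t = b t) \<Longrightarrow> u a = u b"
    and utors: "\<And>a. (\<lambda>i. int m * u a i) \<in> L"
    and udiag: "\<And>a t. t < k0 \<Longrightarrow> u a (r t) = a t"
  shows "direct_summand_iso (product_group {..<k0} (\<lambda>_. integer_mod_group m))
     ((zvec_group N Mod L)\<lparr>carrier := {a \<in> carrier (zvec_group N Mod L).
        \<exists>k::nat. 0 < k \<and> a [^]\<^bsub>zvec_group N Mod L\<^esub> k = \<one>\<^bsub>zvec_group N Mod L\<^esub>}\<rparr>)"
proof -
  define G0 where "G0 = zvec_group N"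
  define Q where "Q = G0 Mod L"
  define K where "K = {a \<in> carrier Q. \<exists>k::nat. 0 < k \<and> a [^]\<^bsub>Q\<^esub> k = \<one>\<^bsub>Q\<^esub>}"
  define T where "T = Q\<lparr>carrier := K\<rparr>"
  define H where "H = product_group {..<k0} (\<lambda>_. integer_mod_group m)"
  define cs where "cs x = (\<lambda>l. l + x) ` L" for x
  have Lneg: "\<And>a. a \<in> L \<Longrightarrow> - a \<in> L"
    using Lsc[of _ "-1"] by (simp add: fun_Compl_def)
  have Ldiff: "\<And>a b. a \<in> L \<Longrightarrow> b \<in> L \<Longrightarrow> a - b \<in> L"
    using Ladd Lneg by (metis diff_conv_add_uminus)
  have cG0: "comm_group G0" unfolding G0_def by (rule zvg_comm_group)
  have gG0: "group G0" using cG0 by (simp add: comm_group_def)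
  have sL: "subgroup L G0"
    using Lsub L0 Ladd Lneg unfolding G0_def
    by (intro group.subgroupI[OF gG0[unfolded G0_def]]) (auto simp: subset_iff)
  have nL: "L \<lhd> G0" using comm_group.subgroup_imp_normal[OF cG0 sL] .
  have gQ: "group Q" unfolding Q_def using normal.factorgroup_is_group[OF nL] .
  have rc: "\<And>x. L #>\<^bsub>G0\<^esub> x = cs x" unfolding G0_def cs_def by (rule rcos_zvg)
  have rc': "\<And>x. L #>\<^bsub>zvec_group N\<^esub> x = cs x" using rc unfolding G0_def .
  have carQ: "carrier Q = cs ` zvecs N"
    unfolding Q_def FactGroup_def RCOSETS_def by (auto simp: rc' G0_def)
  have oneQ: "\<one>\<^bsub>Q\<^esub> = L" unfolding Q_def FactGroup_def by simp
  have multQ: "\<And>x y. x \<in> zvecs N \<Longrightarrow> y \<in> zvecs N \<Longrightarrow> cs x \<otimes>\<^bsub>Q\<^esub> cs y = cs (x + y)"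
  proof -
    fix x y assume "x \<in> zvecs N" "y \<in> zvecs N"
    then show "cs x \<otimes>\<^bsub>Q\<^esub> cs y = cs (x + y)"
      using normal.rcos_sum[OF nL, of x y] unfolding Q_def FactGroup_def
      by (simp add: rc' G0_def)
  qed
  have self: "\<And>x. x \<in> cs x" unfolding cs_def using L0 by force
  have cs_eq: "\<And>x y. cs x = cs y \<longleftrightarrow> x - y \<in> L"
  proof
    fix x y assume "cs x = cs y"
    then have "x \<in> cs y" using self by metis
    then obtain l where "l \<in> L" "x = l + y" unfolding cs_def by auto
    then show "x - y \<in> L" by simp
  next
    fix x y assume d: "x - y \<in> L"
    show "cs x = cs y"
    proof
      show "cs x \<subseteq> cs y" unfolding cs_def
      proof
        fix z assume "z \<in> (\<lambda>l. l + x) ` L"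
        then obtain l where l: "l \<in> L" "z = l + x" by auto
        then have "z = (l + (x - y)) + y" by simp
        then show "z \<in> (\<lambda>l. l + y) ` L" using Ladd[OF l(1) d] by blast
      qed
      show "cs y \<subseteq> cs x" unfolding cs_def
      proof
        fix z assume "z \<in> (\<lambda>l. l + y) ` L"
        then obtain l where l: "l \<in> L" "z = l + y" by auto
        then have "z = (l - (x - y)) + x" by simp
        then show "z \<in> (\<lambda>l. l + x) ` L" using Ldiff[OF l(1) d] by blast
      qed
    qed
  qed
  have csL: "\<And>x. x \<in> L \<Longrightarrow> cs x = L"
  proof -
    fix x assume "x \<in> L"
    then have "cs x = cs 0" using cs_eq by simp
    moreover have "cs 0 = L" unfolding cs_def by simp
    ultimately show "cs x = L" by simp
  qed
  have powQ: "\<And>x k. x \<in> zvecs N \<Longrightarrow> cs x [^]\<^bsub>Q\<^esub> k = cs (\<lambda>i. int k * x i)"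
  proof -
    fix x :: "nat \<Rightarrow> int" and k :: nat assume x: "x \<in> zvecs N"
    show "cs x [^]\<^bsub>Q\<^esub> k = cs (\<lambda>i. int k * x i)"
    proof (induction k)
      case 0
      then show ?case using csL[OF L0] by (simp add: oneQ zero_fun_def)
    next
      case (Suc k)
      have "(\<lambda>i. int k * x i) \<in> zvecs N" using x by (simp add: zvecs_def)
      then have "cs x [^]\<^bsub>Q\<^esub> Suc k = cs ((\<lambda>i. int k * x i) + x)"
        using Suc multQ x by simp
      also have "(\<lambda>i. int k * x i) + x = (\<lambda>i. int (Suc k) * x i)"
        by (simp add: plus_fun_def algebra_simps)
      finally show ?case .
    qed
  qed
  have invQ: "\<And>x. x \<in> zvecs N \<Longrightarrow> inv\<^bsub>Q\<^esub> cs x = cs (- x)"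
  proof -
    fix x :: "nat \<Rightarrow> int" assume x: "x \<in> zvecs N"
    show "inv\<^bsub>Q\<^esub> cs x = cs (- x)"
      using x zvecs_neg[OF x] multQ[of "-x" x] csL[OF L0] 
      by (intro group.inv_equality[OF gQ]) (auto simp: carQ oneQ zero_fun_def[symmetric])
  qed
  have Kchar: "\<And>x. x \<in> zvecs N \<Longrightarrow> cs x \<in> K \<longleftrightarrow> (\<exists>k::nat. 0 < k \<and> (\<lambda>i. int k * x i) \<in> L)"
  proof -
    fix x :: "nat \<Rightarrow> int" assume x: "x \<in> zvecs N"
    have "\<And>k. cs x [^]\<^bsub>Q\<^esub> k = \<one>\<^bsub>Q\<^esub> \<longleftrightarrow> (\<lambda>i. int k * x i) \<in> L"
      using powQ[OF x] cs_eq csL[OF L0] oneQ by (metis cs_def diff_zero image_ident)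
    then show "cs x \<in> K \<longleftrightarrow> (\<exists>k::nat. 0 < k \<and> (\<lambda>i. int k * x i) \<in> L)"
      unfolding K_def using x carQ by auto
  qed
  have Kform: "\<And>XX. XX \<in> K \<Longrightarrow> \<exists>x\<in>zvecs N. XX = cs x"
    unfolding K_def carQ by auto
  have sK: "subgroup K Q"
  proof (rule group.subgroupI[OF gQ])
    show "K \<subseteq> carrier Q" unfolding K_def by auto
    show "K \<noteq> {}" using Kchar[of 0] L0 by (auto simp: zero_fun_def[symmetric])
  next
    fix XX assume "XX \<in> K"
    then obtain x k where x: "x \<in> zvecs N" "XX = cs x" "0 < k" "(\<lambda>i. int k * x i) \<in> L"
      using Kform Kchar by metis
    have "(\<lambda>i. int k * (- x) i) \<in> L" using Lneg[OF x(4)] by (simp add: fun_Compl_def)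
    then show "inv\<^bsub>Q\<^esub> XX \<in> K" using x invQ Kchar zvecs_neg by metis
  next
    fix XX YY assume "XX \<in> K" "YY \<in> K"
    then obtain x k y k' where x: "x \<in> zvecs N" "XX = cs x" "0 < k" "(\<lambda>i. int k * x i) \<in> L"
       and y: "y \<in> zvecs N" "YY = cs y" "0 < k'" "(\<lambda>i. int k' * y i) \<in> L"
      using Kform Kchar by metis
    have "(\<lambda>i. int (k * k') * (x + y) i) = (\<lambda>i. int k' * (int k * x i)) + (\<lambda>i. int k * (int k' * y i))"
      by (simp add: plus_fun_def algebra_simps)
    then have "(\<lambda>i. int (k * k') * (x + y) i) \<in> L" using Ladd Lsc x(4) y(4) by metis
    moreover have "0 < k * k'" using x y by simp
    ultimately show "XX \<otimes>\<^bsub>Q\<^esub> YY \<in> K" using x y multQ Kchar zvecs_add by metis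
  qed
  have gT: "group T" unfolding T_def using subgroup.subgroup_is_group[OF sK gQ] .
  have gH: "group H" unfolding H_def by simp
  have carH: "carrier H = (\<Pi>\<^sub>E t\<in>{..<k0}. {0..<int m})"
    unfolding H_def using mpos by (simp add: carrier_integer_mod_group)
  define \<sigma> where "\<sigma> a = cs (u a)" for a
  define \<pi> where "\<pi> XX = (\<lambda>t\<in>{..<k0}. (SOME x. x \<in> XX) (r t) mod int m)" for XX
  have pi_cs: "\<And>x. \<pi> (cs x) = (\<lambda>t\<in>{..<k0}. x (r t) mod int m)"
  proof -
    fix x
    have "(SOME y. y \<in> cs x) \<in> cs x" by (rule someI[of _ x]) (rule self)
    then obtain l where l: "l \<in> L" "(SOME y. y \<in> cs x) = l + x" unfolding cs_def by auto
    have "\<And>t. t < k0 \<Longrightarrow> (l + x) (r t) mod int m = x (r t) mod int m"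
      using Ldvd[OF l(1)] by (auto simp: plus_fun_def mod_add_left_eq[symmetric] dvd_imp_mod_0)
    then show "\<pi> (cs x) = (\<lambda>t\<in>{..<k0}. x (r t) mod int m)"
      unfolding \<pi>_def l(2) by (intro restrict_ext) auto
  qed
  have ps: "\<And>a. a \<in> carrier H \<Longrightarrow> \<pi> (\<sigma> a) = a"
  proof -
    fix a assume a: "a \<in> carrier H"
    show "\<pi> (\<sigma> a) = a" unfolding \<sigma>_def pi_cs
      using a unfolding carH by (auto simp: udiag PiE_iff extensional_def)
  qed
  have umod: "\<And>a b. (\<And>t. t < k0 \<Longrightarrow> a t mod int m = b t mod int m) \<Longrightarrow> u a - u b \<in> L"
  proof -
    fix a b :: "nat \<Rightarrow> int" assume h: "\<And>t. t < k0 \<Longrightarrow> a t mod int m = b t mod int m"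
    define q where "q t = (a t - b t) div int m" for t
    have "\<And>t. t < k0 \<Longrightarrow> a t = (b + (\<lambda>t. int m * q t)) t"
      using h unfolding q_def plus_fun_def
      by (metis add.commute dvd_div_mult_self mod_eq_dvd_iff mult.commute diff_add_cancel)
    then have "u a = u b + (\<lambda>i. int m * u q i)" using uloc uadd uhom by metis
    then show "u a - u b \<in> L" using utors by simp
  qed
  have sh: "\<sigma> \<in> hom H T"
  proof (rule homI)
    fix a assume "a \<in> carrier H"
    have "(\<lambda>i. int m * u a i) \<in> L" by (rule utors)
    then show "\<sigma> a \<in> carrier T" unfolding T_def \<sigma>_def using Kchar uz mpos by auto
  next
    fix a b assume a: "a \<in> carrier H" and b: "b \<in> carrier H"
    have "a \<otimes>\<^bsub>H\<^esub> b = (\<lambda>t\<in>{..<k0}. (a t + b t) mod int m)"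
      unfolding H_def using mpos by simp
    then have "u (a \<otimes>\<^bsub>H\<^esub> b) - u (a + b) \<in> L" by (intro umod) (simp add: mod_mod_trivial)
    then have "cs (u (a \<otimes>\<^bsub>H\<^esub> b)) = cs (u a + u b)" using cs_eq uadd by simp
    then show "\<sigma> (a \<otimes>\<^bsub>H\<^esub> b) = \<sigma> a \<otimes>\<^bsub>T\<^esub> \<sigma> b"
      unfolding \<sigma>_def T_def using multQ uz by simp
  qed
  have ph: "\<pi> \<in> hom T H"
  proof (rule homI)
    fix XX assume "XX \<in> carrier T"
    then obtain x where "XX = cs x" using Kform unfolding T_def by auto
    then show "\<pi> XX \<in> carrier H" using mpos by (auto simp: carH pi_cs)
  next
    fix XX YY assume "XX \<in> carrier T" "YY \<in> carrier T"
    then obtain x y where x: "x \<in> zvecs N" "XX = cs x" and y: "y \<in> zvecs N" "YY = cs y"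
      using Kform[of XX] Kform[of YY] \<open>XX \<in> carrier T\<close> \<open>YY \<in> carrier T\<close> unfolding T_def by auto
    have "XX \<otimes>\<^bsub>T\<^esub> YY = cs (x + y)" unfolding T_def using x y multQ by simp
    then show "\<pi> (XX \<otimes>\<^bsub>T\<^esub> YY) = \<pi> XX \<otimes>\<^bsub>H\<^esub> \<pi> YY"
      unfolding H_def using x y mpos by (auto simp: pi_cs plus_fun_def mod_add_eq)
  qed
  have "direct_summand_iso H T" by (rule split_summand[OF gT gH sh ph ps])
  then show ?thesis unfolding H_def T_def K_def Q_def G0_def .
qed


lemma thicken_sym:
  assumes "multigraph n c"
  shows "thicken n c v v' d x y = thicken n c v v' d y x"
  using assms unfolding thicken_def multigraph_def by (simp add: insert_commute)

lemma thicken_high: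
  assumes "multigraph n c" "v < n" "v' < n" "n \<le> p"
  shows "thicken n c v v' d p k = (if \<exists>j\<in>{1..d}. {p, k} = {thick_vertex n v v' d (j - 1), thick_vertex n v v' d j}
        then c v v' * d else 0)"
proof -
  have "{p, k} \<noteq> {v, v'}" using assms by (auto simp: doubleton_eq_iff)
  moreover have "c p k = 0" using assms unfolding multigraph_def by auto
  ultimately show ?thesis unfolding thicken_def by simp
qed

lemma thicken_high_dvd:
  assumes "multigraph n c" "v < n" "v' < n" "n \<le> p"
  shows "c v v' * d dvd thicken n c v v' d p k"
  using thicken_high[OF assms] by simp

lemma tv_eq_high:
  assumes "v < n" "v' < n" "thick_vertex n v v' d j = n + s"
  shows "j = s + 1"
  using assms unfolding thick_vertex_def by (auto split: if_splits)

lemma thicken_row: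
  assumes mg: "multigraph n c" and vn: "v < n" "v' < n" and sd: "s + 2 < d"
  shows "thicken n c v v' d (n + s) k =
     (if k = (if s = 0 then v' else n + s - 1) \<or> k = n + s + 1 then c v v' * d else 0)"
proof -
  let ?tv = "thick_vertex n v v' d"
  have tv1: "?tv (s + 1) = n + s" using sd unfolding thick_vertex_def by auto
  have tv0: "?tv s = (if s = 0 then v' else n + s - 1)" using sd unfolding thick_vertex_def by auto
  have tv2: "?tv (s + 2) = n + s + 1" using sd unfolding thick_vertex_def by auto
  have "(\<exists>j\<in>{1..d}. {n + s, k} = {?tv (j - 1), ?tv j}) \<longleftrightarrow>
        (k = (if s = 0 then v' else n + s - 1) \<or> k = n + s + 1)"
  proof
    assume "\<exists>j\<in>{1..d}. {n + s, k} = {?tv (j - 1), ?tv j}"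
    then obtain j where j: "j \<in> {1..d}" "{n + s, k} = {?tv (j - 1), ?tv j}" by blast
    then consider "n + s = ?tv (j - 1)" "k = ?tv j" | "n + s = ?tv j" "k = ?tv (j - 1)"
      by (auto simp: doubleton_eq_iff)
    then show "k = (if s = 0 then v' else n + s - 1) \<or> k = n + s + 1"
    proof cases
      case 1
      then have "j - 1 = s + 1" using tv_eq_high[OF vn] by metis
      then have "j = s + 2" using j by auto
      then show ?thesis using 1 tv2 by simp
    next
      case 2
      then have "j = s + 1" using tv_eq_high[OF vn] by metis
      then show ?thesis using 2 tv0 by simp
    qed
  next
    assume k: "k = (if s = 0 then v' else n + s - 1) \<or> k = n + s + 1"
    show "\<exists>j\<in>{1..d}. {n + s, k} = {?tv (j - 1), ?tv j}"
    proof (cases "k = n + s + 1")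
      case True
      then show ?thesis using sd tv1 tv2 by (intro bexI[of _ "s + 2"]) auto
    next
      case False
      then have "k = ?tv s" using k tv0 by simp
      then show ?thesis using sd tv1 by (intro bexI[of _ "s + 1"]) auto
    qed
  qed
  then show ?thesis using thicken_high[OF mg vn, of "n + s" d k] by simp
qed


lemma mat_vec_add: "mat_vec N A (x + y) = mat_vec N A x + mat_vec N A y"
  by (auto simp: mat_vec_def plus_fun_def distrib_left sum.distrib)

lemma mat_vec_scale: "mat_vec N A (\<lambda>i. z * x i) = (\<lambda>i. z * mat_vec N A x i)"
  by (auto simp: mat_vec_def sum_distrib_left algebra_simps)

lemma mat_vec_zvecs: "mat_vec N A x \<in> zvecs N"
  by (simp add: mat_vec_def zvecs_def)

lemma mat_vec_0: "mat_vec N A 0 = 0"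
  by (auto simp: mat_vec_def)

lemma lap_dvd:
  assumes mg: "multigraph n c" and vn: "v < n" "v' < n" and pj: "n \<le> p \<or> n \<le> j"
  shows "int (c v v' * d) dvd lapM N (thicken n c v v' d) p j"
proof (cases "p = j")
  case True
  then have "n \<le> p" using pj by auto
  then have "\<And>k. int (c v v' * d) dvd int (thicken n c v v' d p k)"
    using thicken_high_dvd[OF mg vn] by (simp only: int_dvd_int_iff)
  then show ?thesis using True unfolding lapM_def by (simp add: dvd_sum)
next
  case False
  have "int (c v v' * d) dvd int (thicken n c v v' d p j)"
  proof (cases "n \<le> p")
    case True then show ?thesis using thicken_high_dvd[OF mg vn] by (simp only: int_dvd_int_iff)
  next
    case False then have "n \<le> j" using pj by auto
    then show ?thesis using thicken_high_dvd[OF mg vn, of j d p] thicken_sym[OF mg]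
      by (metis int_dvd_int_iff)
  qed
  then show ?thesis using False unfolding lapM_def by simp
qed

lemma lap_row:
  assumes mg: "multigraph n c" and vn: "v < n" "v' < n" and sd: "s + 2 < d"
  defines "N \<equiv> n + d - 1" and "ws \<equiv> (if s = 0 then v' else n + s - 1)" and "m \<equiv> int (c v v' * d)"
  shows "mat_vec N (lapM N (thicken n c v v' d)) y (n + s) = m * (y ws + y (n + s + 1) - 2 * y (n + s))"
proof -
  let ?c = "thicken n c v v' d"
  have row: "\<And>k. int (?c (n + s) k) = (if k = ws then m else 0) + (if k = n + s + 1 then m else 0)"
    using thicken_row[OF mg vn sd] vn sd unfolding ws_def m_def
    by (auto simp: split: if_splits)
  have ws1: "ws \<noteq> n + s" "ws \<noteq> n + s + 1" "ws < N" using vn sd unfolding ws_def N_def by auto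
  have ps: "n + s < N" "n + s + 1 < N" using sd unfolding N_def by auto
  have deg: "(\<Sum>k\<in>{..<N} - {n + s}. int (?c (n + s) k)) = 2 * m"
    using ws1 ps by (simp add: row sum.distrib)
  have "mat_vec N (lapM N ?c) y (n + s) = (\<Sum>j<N. lapM N ?c (n + s) j * y j)"
    using ps unfolding mat_vec_def by simp
  also have "\<dots> = (\<Sum>j<N. (if j = ws then m * y j else 0) + (if j = n + s + 1 then m * y j else 0)
        + (if j = n + s then - 2 * m * y j else 0))"
    apply (rule sum.cong[OF refl])
    using ws1 deg unfolding lapM_def by (auto simp: row)
  also have "\<dots> = m * (y ws + y (n + s + 1) - 2 * y (n + s))"
    using ws1 ps by (simp add: sum.distrib algebra_simps)
  finally show ?thesis .
qed


lemma stencil: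
  assumes "v' < n" "t' < d - 2" "t < d - 2"
  defines "yv \<equiv> \<lambda>t p. (if n + t + 1 \<le> p \<and> p < n + d - 1 then int (p - n - t) else 0)"
  shows "yv t' (if t = 0 then v' else n + t - 1) + yv t' (n + t + 1) - 2 * yv t' (n + t)
         = (if t' = t then 1 else 0)"
  using assms unfolding yv_def by auto

theorem lemma1p7:
  fixes n :: nat and c :: "nat \<Rightarrow> nat \<Rightarrow> nat" and i j v v' :: nat and h :: int
    and S :: "nat \<Rightarrow> int"
  assumes "multigraph n c" and "connected_mg n c"
    and "pair_order n c i j h" and "is_marking n c i j h S"
    and "v < n" and "v' < n" and "v \<noteq> v'" and "1 \<le> c v v'"
    and "S v' < S v" and "2 \<le> S v - S v'"
  shows "direct_summand_iso
           (zmod_power (c v v' * nat (S v - S v')) (nat (S v - S v') - 2))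
           (critical_group (n + nat (S v - S v') - 1)
              (thicken n c v v' (nat (S v - S v'))))"
proof -
  note mg = assms(1) and vn = assms(5,6)
  define d where "d = nat (S v - S v')"
  define m where "m = c v v' * d"
  define N where "N = n + d - 1"
  define cc where "cc = thicken n c v v' d"
  define M where "M = lapM N cc"
  define L where "L = lap_image N cc"
  define k0 where "k0 = d - 2"
  define yv where "yv t p = (if n + t + 1 \<le> p \<and> p < n + d - 1 then int (p - n - t) else 0)" for t p
  define Y where "Y a = (\<lambda>p. \<Sum>t<k0. a t * yv t p)" for a :: "nat \<Rightarrow> int"
  define u where "u a = (\<lambda>i. mat_vec N M (Y a) i div int m)" for a
  have d2: "2 \<le> d" using assms(10) unfolding d_def by linarith
  have mpos: "0 < m" using d2 assms(8) unfolding m_def by simp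
  have Lal: "L = mat_vec N M ` zvecs N" unfolding L_def lap_image_def M_def ..
  have Yz: "\<And>a p. \<not> (n \<le> p \<and> p < N) \<Longrightarrow> Y a p = 0"
    unfolding Y_def yv_def N_def by (auto intro!: sum.neutral)
  have Yzv: "\<And>a. Y a \<in> zvecs N" using Yz by (auto simp: zvecs_def)
  have Mdvd: "\<And>p j. n \<le> p \<or> n \<le> j \<Longrightarrow> int m dvd M p j"
    unfolding M_def cc_def m_def using lap_dvd[OF mg vn] by blast
  have MYdvd: "\<And>a i. int m dvd mat_vec N M (Y a) i"
  proof -
    fix a i
    have "\<And>j. int m dvd M i j * Y a j"
    proof -
      fix j show "int m dvd M i j * Y a j"
      proof (cases "n \<le> j")
        case True then show ?thesis using Mdvd by simp
      next
        case False then show ?thesis using Yz by simp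
      qed
    qed
    then show "int m dvd mat_vec N M (Y a) i" unfolding mat_vec_def by (simp add: dvd_sum)
  qed
  have mu: "\<And>a. (\<lambda>i. int m * u a i) = mat_vec N M (Y a)"
    unfolding u_def using MYdvd by (auto intro!: ext dvd_mult_div_cancel)
  have Yadd: "\<And>a b. Y (a + b) = Y a + Y b"
    unfolding Y_def by (auto simp: plus_fun_def distrib_right sum.distrib)
  have Yhom: "\<And>a z. Y (\<lambda>t. z * a t) = (\<lambda>p. z * Y a p)"
    unfolding Y_def by (auto simp: sum_distrib_left algebra_simps)
  have Ldvd: "\<And>x t. x \<in> L \<Longrightarrow> t < k0 \<Longrightarrow> int m dvd x (n + t)"
  proof -
    fix x t assume "x \<in> L" "t < k0"
    then obtain y where y: "x = mat_vec N M y" using Lal by auto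
    show "int m dvd x (n + t)" unfolding y mat_vec_def using Mdvd by (simp add: dvd_sum)
  qed
  have main: "direct_summand_iso (product_group {..<k0} (\<lambda>_. integer_mod_group m))
     ((zvec_group N Mod L)\<lparr>carrier := {a \<in> carrier (zvec_group N Mod L).
        \<exists>k::nat. 0 < k \<and> a [^]\<^bsub>zvec_group N Mod L\<^esub> k = \<one>\<^bsub>zvec_group N Mod L\<^esub>}\<rparr>)"
  proof (rule coset_part[where r = "\<lambda>t. n + t" and u = u])
    show "L \<subseteq> zvecs N" using Lal mat_vec_zvecs by auto
    show "0 \<in> L" using Lal mat_vec_0 zvecs_0 by (metis image_eqI)
    show "\<And>a b. a \<in> L \<Longrightarrow> b \<in> L \<Longrightarrow> a + b \<in> L"
      using Lal mat_vec_add zvecs_add by (smt (verit) image_iff)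
    show "\<And>a z. a \<in> L \<Longrightarrow> (\<lambda>i. z * a i) \<in> L"
    proof -
      fix a z assume "a \<in> L"
      then obtain y where y: "y \<in> zvecs N" "a = mat_vec N M y" using Lal by auto
      have "(\<lambda>i. z * y i) \<in> zvecs N" using y by (simp add: zvecs_def)
      then show "(\<lambda>i. z * a i) \<in> L" using y Lal mat_vec_scale by (metis image_eqI)
    qed
    show "0 < m" by (rule mpos)
    show "\<And>x t. x \<in> L \<Longrightarrow> t < k0 \<Longrightarrow> int m dvd x (n + t)" by (rule Ldvd)
    show "\<And>a. u a \<in> zvecs N" unfolding u_def using mat_vec_zvecs by (simp add: zvecs_def)
    show "\<And>a b. u (a + b) = u a + u b"
    proof -
      fix a b :: "nat \<Rightarrow> int"
      have "mat_vec N M (Y (a + b)) = mat_vec N M (Y a) + mat_vec N M (Y b)"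
        by (simp add: Yadd mat_vec_add)
      then show "u (a + b) = u a + u b"
        unfolding u_def using MYdvd[of a] by (auto simp: plus_fun_def div_plus_div_distrib_dvd_left)
    qed
    show "\<And>a z. u (\<lambda>t. z * a t) = (\<lambda>i. z * u a i)"
      unfolding u_def using MYdvd by (auto simp: Yhom mat_vec_scale div_mult_swap)
    show "\<And>a b. (\<And>t. t < k0 \<Longrightarrow> a t = b t) \<Longrightarrow> u a = u b"
    proof -
      fix a b :: "nat \<Rightarrow> int" assume "\<And>t. t < k0 \<Longrightarrow> a t = b t"
      then have "Y a = Y b" unfolding Y_def by (auto intro!: sum.cong)
      then show "u a = u b" unfolding u_def by simp
    qed
    show "\<And>a. (\<lambda>i. int m * u a i) \<in> L" using mu Lal Yzv by auto
    show "\<And>a t. t < k0 \<Longrightarrow> u a (n + t) = a t"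
    proof -
      fix a :: "nat \<Rightarrow> int" and t assume t: "t < k0"
      define ws where "ws = (if t = 0 then v' else n + t - 1)"
      have "mat_vec N M (Y a) (n + t) = int m * (Y a ws + Y a (n + t + 1) - 2 * Y a (n + t))"
        unfolding M_def cc_def N_def ws_def m_def
        by (rule lap_row[OF mg vn]) (use t k0_def in simp)
      also have "Y a ws + Y a (n + t + 1) - 2 * Y a (n + t)
          = (\<Sum>t'<k0. a t' * (yv t' ws + yv t' (n + t + 1) - 2 * yv t' (n + t)))"
        unfolding Y_def by (simp add: algebra_simps sum.distrib sum_distrib_left sum_subtractf)
      also have "\<dots> = (\<Sum>t'<k0. (if t' = t then a t' else 0))"
        apply (rule sum.cong[OF refl])
        using stencil[OF vn(2), of _ d t] t unfolding k0_def ws_def yv_def by auto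
      also have "\<dots> = a t" using t by simp
      finally show "u a (n + t) = a t" unfolding u_def using mpos by simp
    qed
  qed
  show ?thesis using main
    unfolding zmod_power_def critical_group_def coker_group_def L_def k0_def N_def m_def cc_def d_def .
qed

end
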